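(* Let $\Omega\subset\mathbb{R}^N$ be a bounded open set and let $p,q:\Omega\to[1,\infty)$ be measurable with $q(x)\le p(x)\le p_+<\infty$ for all $x\in\Omega$. Let $K\subset\Omega$ be compact and suppose $\varphi(t)=|\{x\in\Omega:d_K(x)<t\}|\le C(\ln(e/t))^{1-\sigma}$ for all $t\in(0,1]$, for some $C>0$ and $\sigma>1$. Let $\psi:(e,\infty)\to(0,\infty)$ be such that $\psi(t)/\ln\ln t$ is decreasing and $\lim_{t\to\infty}\psi(t)=\infty$, and assume that for a.e. $x\in\Omega$ we have $0<d_K(x)<1/e$ and $$\frac{1}{p(x)-q(x)}\le\frac{\ln\ln(1/d_K(x))}{\psi(1/d_K(x))}.$$ Then $L^{p(\cdot)}(\Omega)$ is almost-compactly embedded in $L^{q(\cdot)}(\Omega)$.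
   Context: $d_K(x)=\operatorname{dist}(x,K)$; $\frac1{p(x)-q(x)}=+\infty$ where $p(x)=q(x)$. For measurable $e:\Omega\to[1,\infty)$, $\|u\|_{e(\cdot)}=\inf\{\lambda>0:\int_\Omega|u(x)/\lambda|^{e(x)}dx\le1\}$ and $L^{e(\cdot)}(\Omega)$ is the set of measurable $u$ with finite norm. Almost-compact embedding: for Banach function spaces $X,Y$ on $\Omega$, $X$ is almost-compactly embedded in $Y$ if for every sequence $\{E_n\}$ of measurable subsets of $\Omega$ with $\chi_{E_n}\to0$ pointwise a.e. one has $\lim_{n\to\infty}\sup_{\|u\|_X\le1}\|u\chi_{E_n}\|_Y=0$. *)

theory Defs
  imports "HOL-Analysis.Analysis"
begin

definition var_modular :: "('a::euclidean_space \<Rightarrow> real) \<Rightarrow> 'a set \<Rightarrow> ('a \<Rightarrow> real) \<Rightarrow> ennreal" where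
  "var_modular e \<Omega> u = (\<integral>\<^sup>+ x\<in>\<Omega>. ennreal (\<bar>u x\<bar> powr e x) \<partial>lebesgue)"

text \<open>Luxemburg norm; it is infinite when no admissible lambda exists.\<close>
definition lux_norm :: "('a::euclidean_space \<Rightarrow> real) \<Rightarrow> 'a set \<Rightarrow> ('a \<Rightarrow> real) \<Rightarrow> ereal" where
  "lux_norm e \<Omega> u = Inf {ereal l | l. l > 0 \<and> var_modular e \<Omega> (\<lambda>x. u x / l) \<le> 1}"

definition var_Lp :: "('a::euclidean_space \<Rightarrow> real) \<Rightarrow> 'a set \<Rightarrow> ('a \<Rightarrow> real) set" where
  "var_Lp e \<Omega> = {u. set_borel_measurable lebesgue \<Omega> u \<and> lux_norm e \<Omega> u < \<infinity>}"

definition almost_compact_emb :: "'a::euclidean_space set \<Rightarrow> ('a \<Rightarrow> real) \<Rightarrow> ('a \<Rightarrow> real) \<Rightarrow> bool" where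
  "almost_compact_emb \<Omega> p q \<longleftrightarrow>
     (\<forall>E :: nat \<Rightarrow> 'a set.
        (\<forall>n. E n \<in> sets lebesgue \<and> E n \<subseteq> \<Omega>) \<and>
        (AE x in lebesgue. x \<in> \<Omega> \<longrightarrow> (\<lambda>n. indicator (E n) x :: real) \<longlonglongrightarrow> 0)
        \<longrightarrow> (\<lambda>n. SUP u\<in>{u \<in> var_Lp p \<Omega>. lux_norm p \<Omega> u \<le> 1}.
                    lux_norm q \<Omega> (\<lambda>x. u x * indicator (E n) x)) \<longlonglongrightarrow> 0)"

end

theory Submission
  imports Defs
begin

lemma infdist_meas: "(\<lambda>x. infdist x K) \<in> borel_measurable (lebesgue :: 'a::euclidean_space measure)"
  apply (rule measurable_completion) 
  apply (simp only: measurable_lborel2)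
  apply (rule borel_measurable_continuous_onI) by (intro continuous_intros)

lemma key_pw:
  fixes a M q p P c \<eta> :: real
  assumes "0 \<le> a" "1 \<le> M" "1 \<le> q" "q \<le> p" "p \<le> P" "1 \<le> c" "M powr (q - p) \<le> \<eta>"
  shows "(c*a) powr q \<le> c powr P * (M powr P + a powr p * \<eta>)"
proof -
  have aq: "a powr q \<le> M powr P + a powr p * \<eta>"
  proof (cases "a \<le> M")
    case True
    have "a powr q \<le> M powr q" using True assms by (intro powr_mono2) auto
    also have "\<dots> \<le> M powr P" using assms by (intro powr_mono) auto
    moreover have "0 \<le> \<eta>" using assms(7) by (metis powr_ge_zero order_trans)
    ultimately show ?thesis using assms by (simp add: add_increasing2)
  next
    case False
    then have aM: "M < a" by simp
    have "a powr q = a powr p * a powr (q - p)" using aM assms by (simp add: powr_add[symmetric] add_diff_eq)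
    also have "a powr (q - p) \<le> M powr (q - p)" using aM assms
      by (intro powr_mono2') auto
    then have "a powr p * a powr (q - p) \<le> a powr p * \<eta>" using assms
      by (intro mult_left_mono) auto
    finally have "a powr q \<le> a powr p * \<eta>" .
    moreover have "0 \<le> M powr P" by simp
    ultimately show ?thesis by linarith
  qed
  have "(c*a) powr q = c powr q * a powr q" using assms by (simp add: powr_mult)
  also have "\<dots> \<le> c powr P * a powr q" using assms by (intro mult_right_mono powr_mono) auto
  also have "\<dots> \<le> c powr P * (M powr P + a powr p * \<eta>)" using aq by (intro mult_left_mono) auto
  finally show ?thesis .
qed

lemma dyadic_exists:
  fixes L :: real assumes "1 < L"
  shows "\<exists>k::nat. 2^k < L \<and> L \<le> 2^(k+1)"
proof -
  obtain n :: nat where n: "L \<le> 2^(n+1)"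
  proof -
    obtain n::nat where "L < 2^n" using real_arch_pow[of 2 L] by auto
    moreover have "(2::real)^n \<le> 2^(n+1)" by (intro power_increasing) auto
    ultimately show ?thesis using that by (meson less_le_trans less_imp_le)
  qed
  define k where "k = (LEAST n::nat. L \<le> 2^(n+1))"
  have k1: "L \<le> 2^(k+1)" unfolding k_def using n by (rule LeastI)
  have k2: "2^k < L"
  proof (cases k)
    case 0 then show ?thesis using assms by simp
  next
    case (Suc m)
    then have "\<not> L \<le> 2^(m+1)" using not_less_Least[of m "\<lambda>n::nat. L \<le> 2^(n+1)"] unfolding k_def by auto
    then show ?thesis using Suc by simp
  qed
  show ?thesis using k1 k2 by blast
qed

lemma pow2_powr: "((2::real)^j) powr u = (2 powr u)^j"
  by (simp add: powr_power powr_realpow[symmetric] powr_powr mult.commute)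

lemma dyadic_int:
  fixes \<Omega> :: "'a::euclidean_space set" and d :: "'a \<Rightarrow> real"
  assumes \<Omega>m: "\<Omega> \<in> sets lebesgue" and bdd: "bounded \<Omega>"
    and dm[measurable]: "d \<in> borel_measurable lebesgue"
    and phi: "\<forall>t\<in>{0<..1}. measure lebesgue {x\<in>\<Omega>. d x < t} \<le> C * (ln (exp 1 / t)) powr (1 - \<sigma>)"
    and ae: "AE x in lebesgue. x \<in> \<Omega> \<longrightarrow> 0 < d x \<and> d x < 1 / exp 1"
    and b0: "0 \<le> \<beta>" and b1: "\<beta> < \<sigma> - 1" and C0: "C > 0"
  shows "(\<integral>\<^sup>+ x. ennreal (ln (exp 1 / d x) powr \<beta>) * indicator \<Omega> x \<partial>lebesgue) < \<infinity>"
proof -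
  define T :: "nat \<Rightarrow> real" where "T j = exp (1 - 2^j)" for j
  define A where "A j = {x\<in>\<Omega>. d x < T j}" for j
  have Am[measurable]: "A j \<in> sets lebesgue" for j unfolding A_def using \<Omega>m by measurable
  have Af: "A j \<in> fmeasurable lebesgue" for j
    by (rule bounded_set_imp_lmeasurable[OF bounded_subset[OF bdd] Am]) (auto simp: A_def)
  have AM: "emeasure lebesgue (A j) \<le> ennreal (C * (2 powr (1-\<sigma>))^j)" for j
  proof -
    have T01: "T j \<in> {0<..1}" unfolding T_def by auto
    have lnT: "ln (exp 1 / T j) = 2^j" unfolding T_def by (simp add: exp_diff[symmetric])
    have "measure lebesgue {x\<in>\<Omega>. d x < T j} \<le> C * (ln (exp 1 / T j)) powr (1 - \<sigma>)"
      using phi T01 by blast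
    then have "measure lebesgue (A j) \<le> C * (2^j) powr (1 - \<sigma>)"
      unfolding A_def lnT .
    then have "measure lebesgue (A j) \<le> C * (2 powr (1-\<sigma>))^j" by (simp add: pow2_powr)
    then show ?thesis by (subst emeasure_eq_measure2[OF Af]) (rule ennreal_leI)
  qed
  define r where "r = 2 powr \<beta>"
  have r1: "1 \<le> r" unfolding r_def using b0 powr_mono[of 0 \<beta> "2::real"] by simp
  have pw: "AE x in lebesgue. ennreal (ln (exp 1 / d x) powr \<beta>) * indicator \<Omega> x
      \<le> (\<Sum>j. ennreal (r^(j+1)) * indicator (A j) x)"
    using ae
  proof eventually_elim
    case (elim x)
    show ?case
    proof (cases "x \<in> \<Omega>")
      case False then show ?thesis by simp
    next
      case True
      with elim have d0: "0 < d x" and d1: "d x < 1 / exp 1" by auto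
      have Leq: "ln (exp 1 / d x) = 1 - ln (d x)" using d0 by (simp add: ln_div)
      have "ln (d x) < ln (1 / exp 1)" using d0 d1 by (intro ln_less_cancel_iff[THEN iffD2]) auto
      then have "ln (d x) < -1" by (simp add: ln_div)
      then have L1: "1 < ln (exp 1 / d x)" using Leq by simp
      obtain k where k1: "2^k < ln (exp 1 / d x)" and k2: "ln (exp 1 / d x) \<le> 2^(k+1)"
        using dyadic_exists[OF L1] by blast
      have "ln (d x) < 1 - 2^k" using k1 Leq by simp
      then have "d x < T k" unfolding T_def using d0
        by (metis exp_less_cancel_iff exp_ln)
      then have xA: "x \<in> A k" using True unfolding A_def by simp
      have "ln (exp 1 / d x) powr \<beta> \<le> (2^(k+1)) powr \<beta>"
        using L1 k2 b0 by (intro powr_mono2) auto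
      also have "\<dots> = r^(k+1)" unfolding r_def by (rule pow2_powr)
      finally have "ennreal (ln (exp 1 / d x) powr \<beta>) * indicator \<Omega> x \<le> ennreal (r^(k+1)) * indicator (A k) x"
        using True xA by (simp add: ennreal_leI)
      also have "\<dots> \<le> (\<Sum>j. ennreal (r^(j+1)) * indicator (A j) x)"
        using ennreal_suminf_lessD[of "\<lambda>j. ennreal (r^(j+1)) * indicator (A j) x" "ennreal (r^(k+1)) * indicator (A k) x" k]
        by (meson not_le order_less_irrefl)
      finally show ?thesis .
    qed
  qed
  have "(\<integral>\<^sup>+ x. ennreal (ln (exp 1 / d x) powr \<beta>) * indicator \<Omega> x \<partial>lebesgue)
      \<le> (\<integral>\<^sup>+ x. (\<Sum>j. ennreal (r^(j+1)) * indicator (A j) x) \<partial>lebesgue)"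
    by (rule nn_integral_mono_AE[OF pw])
  also have "\<dots> = (\<Sum>j. \<integral>\<^sup>+ x. ennreal (r^(j+1)) * indicator (A j) x \<partial>lebesgue)"
    by (rule nn_integral_suminf) measurable
  also have "\<dots> = (\<Sum>j. ennreal (r^(j+1)) * emeasure lebesgue (A j))"
    by (simp add: nn_integral_cmult_indicator)
  also have "\<dots> \<le> (\<Sum>j. ennreal (r^(j+1) * (C * (2 powr (1-\<sigma>))^j)))"
  proof (intro suminf_le)
    fix j
    have "ennreal (r^(j+1)) * emeasure lebesgue (A j) \<le> ennreal (r^(j+1)) * ennreal (C * (2 powr (1-\<sigma>))^j)"
      by (rule mult_left_mono[OF AM]) simp
    also have "\<dots> = ennreal (r^(j+1) * (C * (2 powr (1-\<sigma>))^j))"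
      using r1 C0 by (subst ennreal_mult) auto
    finally show "ennreal (r^(j+1)) * emeasure lebesgue (A j) \<le> ennreal (r^(j+1) * (C * (2 powr (1-\<sigma>))^j))" .
  qed (auto intro: summableI)
  also have "\<dots> = ennreal (\<Sum>j. r^(j+1) * (C * (2 powr (1-\<sigma>))^j))"
  proof (rule suminf_ennreal2)
    show "0 \<le> r^(j+1) * (C * (2 powr (1-\<sigma>))^j)" for j using r1 C0 by simp
    have eq: "(\<lambda>j. r^(j+1) * (C * (2 powr (1-\<sigma>))^j)) = (\<lambda>j. (r * C) * (2 powr (\<beta> + 1 - \<sigma>))^j)"
    proof
      fix j
      have "r^(j+1) * (C * (2 powr (1-\<sigma>))^j) = (r * C) * (r^j * (2 powr (1-\<sigma>))^j)"
        by (simp add: algebra_simps)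
      also have "r^j * (2 powr (1-\<sigma>))^j = (2 powr (\<beta> + 1 - \<sigma>))^j"
        unfolding r_def power_mult_distrib[symmetric] by (simp add: powr_add[symmetric] add_diff_eq)
      finally show "r^(j+1) * (C * (2 powr (1-\<sigma>))^j) = (r * C) * (2 powr (\<beta> + 1 - \<sigma>))^j" .
    qed
    have "summable (\<lambda>j. (2 powr (\<beta> + 1 - \<sigma>))^j)"
    proof (intro summable_geometric)
      have "2 powr (\<beta> + 1 - \<sigma>) < 2 powr 0" using b1 by (intro powr_less_mono) auto
      then show "norm (2 powr (\<beta> + 1 - \<sigma>)) < (1::real)" by simp
    qed
    then show "summable (\<lambda>j. r^(j+1) * (C * (2 powr (1-\<sigma>))^j))"
      unfolding eq by (rule summable_mult)
  qed
  also have "\<dots> < \<infinity>" by simp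
  finally show ?thesis .
qed

lemma pw_bound:
  fixes dd pp qq B \<gamma> \<eta> L S \<delta> :: real and \<psi> :: "real \<Rightarrow> real"
  assumes d0: "0 < dd" and d1: "dd < 1 / exp 1" and qp: "qq < pp"
    and h: "1 / (pp - qq) \<le> ln (ln (1 / dd)) / \<psi> (1 / dd)"
    and psipos: "\<forall>t>exp 1. \<psi> t > 0"
    and mono: "\<forall>s t. exp 1 < s \<and> s \<le> t \<longrightarrow> \<psi> t / ln (ln t) \<le> \<psi> s / ln (ln s)"
    and S: "S > exp 1" and SL: "\<forall>s\<ge>S. L \<le> \<psi> s" and \<delta>: "\<delta> = \<psi> S / ln (ln S)"
    and B1: "1 \<le> B" and B\<delta>: "B powr (-\<delta>) \<le> \<eta>" and \<gamma>0: "\<gamma> > 0" and L\<eta>: "exp (-\<gamma>*L) \<le> \<eta>"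
  shows "1 \<le> B * ln (exp 1 / dd) powr \<gamma> \<and> (B * ln (exp 1 / dd) powr \<gamma>) powr (qq - pp) \<le> \<eta>"
proof -
  define s where "s = 1 / dd"
  have s: "s > exp 1" unfolding s_def using d0 d1 by (simp add: field_simps)
  have s0: "0 < s" using s exp_gt_zero[of 1] by linarith
  have "ln (exp 1) < ln s" using s s0 by (subst ln_less_cancel_iff) auto
  then have lns: "ln s > 1" by simp
  have llns: "ln (ln s) > 0" using lns by simp
  have psis: "\<psi> s > 0" using psipos s by auto
  have h': "1 / (pp - qq) \<le> ln (ln s) / \<psi> s" using h unfolding s_def .
  have pq: "\<psi> s / ln (ln s) \<le> pp - qq"
  proof -
    have "1 \<le> (pp - qq) * (ln (ln s) / \<psi> s)" using h' qp by (simp add: field_simps)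
    then have "\<psi> s \<le> (pp - qq) * ln (ln s)" using psis by (simp add: field_simps)
    then show ?thesis using llns by (simp add: field_simps)
  qed
  define Lg where "Lg = ln (exp 1 / dd)"
  have Lg: "Lg = 1 + ln s" unfolding Lg_def s_def using d0 by (simp add: ln_div)
  have Lg1: "1 \<le> Lg" using Lg lns by simp
  have Lgg: "1 \<le> Lg powr \<gamma>" using Lg1 \<gamma>0 by (simp add: ge_one_powr_ge_zero)
  have "1*1 \<le> B * Lg powr \<gamma>" by (rule mult_mono) (use B1 Lgg in auto)
  then have M1: "1 \<le> B * Lg powr \<gamma>" by simp
  have Mq: "(B * Lg powr \<gamma>) powr (qq - pp) = B powr (qq - pp) * Lg powr (\<gamma> * (qq - pp))"
    using B1 Lg1 by (simp add: powr_mult powr_powr)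
  have Bpart: "B powr (qq - pp) \<le> 1" using B1 qp powr_mono[of "qq-pp" 0 B] by simp
  have "\<gamma> * (qq - pp) \<le> 0" using qp \<gamma>0 by (intro mult_nonneg_nonpos) auto
  then have Lpart: "Lg powr (\<gamma> * (qq - pp)) \<le> 1" using Lg1 powr_mono[of "\<gamma> * (qq - pp)" 0 Lg] by simp
  have Bnn: "0 \<le> B powr (qq - pp)" by simp
  have Lnn: "0 \<le> Lg powr (\<gamma> * (qq - pp))" by simp
  have "B powr (qq - pp) * Lg powr (\<gamma> * (qq - pp)) \<le> \<eta>"
  proof (cases "s \<ge> S")
    case True
    then have Ls: "L \<le> \<psi> s" using SL by auto
    have "ln (ln s) \<le> ln Lg" using Lg lns by simp
    then have "(pp - qq) * ln (ln s) \<le> (pp - qq) * ln Lg" using qp by (intro mult_left_mono) auto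
    moreover have "\<psi> s \<le> (pp - qq) * ln (ln s)" using pq llns by (simp add: pos_divide_le_eq)
    ultimately have "\<psi> s \<le> (pp - qq) * ln Lg" by linarith
    then have "\<gamma> * L \<le> \<gamma> * ((pp - qq) * ln Lg)" using Ls \<gamma>0 by (intro mult_left_mono) auto
    moreover have "\<gamma> * (qq - pp) * ln Lg = -(\<gamma> * ((pp - qq) * ln Lg))" by (simp add: algebra_simps)
    ultimately have "\<gamma> * (qq - pp) * ln Lg \<le> -\<gamma> * L" by linarith
    then have "Lg powr (\<gamma> * (qq - pp)) \<le> exp (-\<gamma> * L)"
      using Lg1 by (simp add: powr_def)
    then have "Lg powr (\<gamma> * (qq - pp)) \<le> \<eta>" using L\<eta> by linarith
    then have "B powr (qq - pp) * Lg powr (\<gamma> * (qq - pp)) \<le> 1 * \<eta>"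
      using Bpart Bnn Lnn by (intro mult_mono) auto
    then show ?thesis by simp
  next
    case False
    then have "\<psi> S / ln (ln S) \<le> \<psi> s / ln (ln s)" using mono s by auto
    then have "\<delta> \<le> pp - qq" using pq \<delta> by linarith
    then have "B powr (qq - pp) \<le> B powr (-\<delta>)" using B1 by (intro powr_mono) auto
    then have "B powr (qq - pp) \<le> \<eta>" using B\<delta> by linarith
    have eta0: "0 \<le> \<eta>" using B\<delta> powr_ge_zero[of B "-\<delta>"] by linarith
    have "B powr (qq - pp) * Lg powr (\<gamma> * (qq - pp)) \<le> \<eta> * 1"
      using Lpart Bnn Lnn eta0 \<open>B powr (qq - pp) \<le> \<eta>\<close> by (intro mult_mono) auto
    then show ?thesis by simp
  qed
  then show ?thesis using M1 Mq unfolding Lg_def by simp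
qed

lemma lux_nonneg: "0 \<le> lux_norm e \<Omega> u"
  unfolding lux_norm_def by (rule Inf_greatest) auto

lemma lux_le:
  assumes "0 < \<epsilon>" "var_modular e \<Omega> (\<lambda>x. u x / \<epsilon>) \<le> 1"
  shows "lux_norm e \<Omega> u \<le> ereal \<epsilon>"
  unfolding lux_norm_def by (rule Inf_lower) (use assms in auto)

lemma lux_small:
  assumes "lux_norm e \<Omega> u \<le> 1"
  shows "\<exists>l. 0 < l \<and> l < 2 \<and> var_modular e \<Omega> (\<lambda>x. u x / l) \<le> 1"
proof -
  have "lux_norm e \<Omega> u < ereal 2" 
  proof -
    have "(1::ereal) < ereal 2" by simp
    then show ?thesis using assms by (rule le_less_trans[rotated])
  qed
  then obtain y where "y \<in> {ereal l | l. l > 0 \<and> var_modular e \<Omega> (\<lambda>x. u x / l) \<le> 1}" "y < ereal 2"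
    unfolding lux_norm_def Inf_less_iff by blast
  then show ?thesis by auto
qed

theorem mainTheorem12:
  fixes \<Omega> K :: "'a::euclidean_space set"
    and p q :: "'a \<Rightarrow> real" and p_plus C \<sigma> :: real and \<psi> :: "real \<Rightarrow> real"
  assumes "open \<Omega>" and "bounded \<Omega>"
    and "set_borel_measurable lebesgue \<Omega> p" and "set_borel_measurable lebesgue \<Omega> q"
    and "\<forall>x\<in>\<Omega>. 1 \<le> q x \<and> q x \<le> p x \<and> p x \<le> p_plus"
    and "compact K" and "K \<subseteq> \<Omega>"
    and "C > 0" and "\<sigma> > 1"
    and "\<forall>t\<in>{0<..1}. measure lebesgue {x\<in>\<Omega>. infdist x K < t} \<le> C * (ln (exp 1 / t)) powr (1 - \<sigma>)"
    and "\<forall>t>exp 1. \<psi> t > 0"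
    and "\<forall>s t. exp 1 < s \<and> s \<le> t \<longrightarrow> \<psi> t / ln (ln t) \<le> \<psi> s / ln (ln s)"
    and "filterlim \<psi> at_top at_top"
    and "AE x in lebesgue. x \<in> \<Omega> \<longrightarrow>
           0 < infdist x K \<and> infdist x K < 1 / exp 1 \<and> q x < p x \<and>
           1 / (p x - q x) \<le> ln (ln (1 / infdist x K)) / \<psi> (1 / infdist x K)"
  shows "almost_compact_emb \<Omega> p q"
proof -
  note infdist_meas[measurable]
  have \<Omega>m[measurable]: "\<Omega> \<in> sets lebesgue"
    using lmeasurable_open[OF assms(2) assms(1)] by (simp add: fmeasurableD)
  define P where "P = max p_plus 1"
  have P1: "1 \<le> P" unfolding P_def by simp
  define \<gamma> where "\<gamma> = (\<sigma> - 1) / (2 * P)"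
  have \<gamma>0: "0 < \<gamma>" unfolding \<gamma>_def using P1 assms(9) by simp
  have \<gamma>P: "\<gamma> * P = (\<sigma> - 1) / 2" unfolding \<gamma>_def using P1 by (simp add: field_simps)
  have ae': "AE x in lebesgue. x \<in> \<Omega> \<longrightarrow> 0 < infdist x K \<and> infdist x K < 1 / exp 1"
    using assms(14) by eventually_elim auto
  have int0: "(\<integral>\<^sup>+ x. ennreal (ln (exp 1 / infdist x K) powr (\<gamma> * P)) * indicator \<Omega> x \<partial>lebesgue) < \<infinity>"
    unfolding \<gamma>P using dyadic_int[of \<Omega> "\<lambda>x. infdist x K" C \<sigma> "(\<sigma> - 1) / 2", OF \<Omega>m assms(2) infdist_meas assms(10) ae']
      assms(8,9) by simp
  have K: "\<exists>N. \<forall>n\<ge>N. \<forall>u\<in>{u \<in> var_Lp p \<Omega>. lux_norm p \<Omega> u \<le> 1}.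
              lux_norm q \<Omega> (\<lambda>x. u x * indicator (E n) x) \<le> ereal \<epsilon>"
    if \<epsilon>0: "0 < \<epsilon>" and \<epsilon>1: "\<epsilon> \<le> 1"
      and hE: "\<forall>n. E n \<in> sets lebesgue \<and> E n \<subseteq> \<Omega>"
      and hE2: "AE x in lebesgue. x \<in> \<Omega> \<longrightarrow> (\<lambda>n. indicator (E n) x :: real) \<longlonglongrightarrow> 0"
    for \<epsilon> and E :: "nat \<Rightarrow> 'a set"
  proof -
    have Em[measurable]: "E n \<in> sets lebesgue" for n using hE by auto
    define c where "c = 2 / \<epsilon>"
    have c1: "1 \<le> c" unfolding c_def using \<epsilon>0 \<epsilon>1 by (simp add: field_simps)
    define \<eta> where "\<eta> = 1 / (2 * c powr P)"
    have cP0: "0 < c powr P" using c1 by simp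
    have \<eta>0: "0 < \<eta>" unfolding \<eta>_def using cP0 by simp
    have c\<eta>: "c powr P * \<eta> = 1/2" unfolding \<eta>_def using cP0 by simp
    define L where "L = - ln \<eta> / \<gamma>"
    have L\<eta>: "exp (-\<gamma> * L) \<le> \<eta>" unfolding L_def using \<gamma>0 \<eta>0 by simp
    obtain S0 where S0: "\<forall>s\<ge>S0. L \<le> \<psi> s"
      using assms(13) unfolding filterlim_at_top eventually_at_top_linorder by blast
    define S where "S = max S0 (exp 1 + 1)"
    have S: "S > exp 1" unfolding S_def by simp
    have SL: "\<forall>s\<ge>S. L \<le> \<psi> s" using S0 unfolding S_def by auto
    define \<delta> where "\<delta> = \<psi> S / ln (ln S)"
    have S0': "0 < S" using S exp_gt_zero[of 1] by linarith
    have "ln (exp 1) < ln S" using S S0' by (subst ln_less_cancel_iff) auto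
    then have "0 < ln (ln S)" by simp
    then have \<delta>0: "0 < \<delta>" unfolding \<delta>_def using assms(11) S by simp
    define B where "B = max 1 (\<eta> powr (-1/\<delta>))"
    have B1: "1 \<le> B" unfolding B_def by simp
    have B\<delta>: "B powr (-\<delta>) \<le> \<eta>"
    proof -
      have "B powr (-\<delta>) \<le> (\<eta> powr (-1/\<delta>)) powr (-\<delta>)"
        using \<delta>0 \<eta>0 unfolding B_def by (intro powr_mono2') auto
      also have "\<dots> = \<eta>" using \<delta>0 \<eta>0 by (simp add: powr_powr)
      finally show ?thesis .
    qed
    define M where "M x = B * ln (exp 1 / infdist x K) powr \<gamma>" for x
    define W where "W x = M x powr P" for x
    have Wm[measurable]: "W \<in> borel_measurable lebesgue" unfolding W_def M_def by measurable
    have Weq: "W x = B powr P * ln (exp 1 / infdist x K) powr (\<gamma> * P)" for x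
      unfolding W_def M_def using B1 by (simp add: powr_mult powr_powr)
    have Wint: "(\<integral>\<^sup>+ x. ennreal (W x) * indicator \<Omega> x \<partial>lebesgue) < \<infinity>"
    proof -
      have "(\<integral>\<^sup>+ x. ennreal (W x) * indicator \<Omega> x \<partial>lebesgue)
          = (\<integral>\<^sup>+ x. ennreal (B powr P) * (ennreal (ln (exp 1 / infdist x K) powr (\<gamma> * P)) * indicator \<Omega> x) \<partial>lebesgue)"
        unfolding Weq by (simp add: ennreal_mult mult.assoc)
      also have "\<dots> = ennreal (B powr P) * (\<integral>\<^sup>+ x. ennreal (ln (exp 1 / infdist x K) powr (\<gamma> * P)) * indicator \<Omega> x \<partial>lebesgue)"
        by (rule nn_integral_cmult) measurable
      also have "\<dots> < \<infinity>" using int0 by (simp add: ennreal_mult_less_top)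
      finally show ?thesis .
    qed
    have conv: "(\<lambda>n. \<integral>\<^sup>+ x. ennreal (W x) * indicator \<Omega> x * indicator (E n) x \<partial>lebesgue) \<longlonglongrightarrow> (\<integral>\<^sup>+ x. 0 \<partial>(lebesgue :: 'a measure))"
    proof (rule nn_integral_dominated_convergence[where w = "\<lambda>x. ennreal (W x) * indicator \<Omega> x"
        and u = "\<lambda>n x. ennreal (W x) * indicator \<Omega> x * indicator (E n) x" and u' = "\<lambda>x. 0"])
      show "AE x in lebesgue. ennreal (W x) * indicator \<Omega> x * indicator (E j) x \<le> ennreal (W x) * indicator \<Omega> x" for j
        by (auto split: split_indicator)
      show "(\<integral>\<^sup>+ x. ennreal (W x) * indicator \<Omega> x \<partial>lebesgue) < \<infinity>" by (rule Wint)
      show "AE x in lebesgue. (\<lambda>n. ennreal (W x) * indicator \<Omega> x * indicator (E n) x) \<longlonglongrightarrow> 0"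
        using hE2
      proof eventually_elim
        case (elim x)
        show ?case
        proof (cases "x \<in> \<Omega>")
          case False then show ?thesis by simp
        next
          case True
          then have "(\<lambda>n. indicator (E n) x :: real) \<longlonglongrightarrow> 0" using elim by simp
          then have "eventually (\<lambda>n. dist (indicator (E n) x :: real) 0 < 1/2) sequentially"
            by (rule tendstoD) simp
          then have "eventually (\<lambda>n. ennreal (W x) * indicator \<Omega> x * indicator (E n) x = 0) sequentially"
            by (rule eventually_mono) (auto split: split_indicator)
          then show ?thesis by (rule tendsto_eventually)
        qed
      qed
    qed measurable
    then have conv': "(\<lambda>n. \<integral>\<^sup>+ x. ennreal (W x) * indicator \<Omega> x * indicator (E n) x \<partial>lebesgue) \<longlonglongrightarrow> 0"
      by simp
    have "eventually (\<lambda>n. (\<integral>\<^sup>+ x. ennreal (W x) * indicator \<Omega> x * indicator (E n) x \<partial>lebesgue) < ennreal \<eta>) sequentially"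
      using conv' \<eta>0 by (intro order_tendstoD(2)) auto
    then obtain N where N: "\<And>n. n \<ge> N \<Longrightarrow> (\<integral>\<^sup>+ x. ennreal (W x) * indicator \<Omega> x * indicator (E n) x \<partial>lebesgue) < ennreal \<eta>"
      unfolding eventually_sequentially by blast
    show ?thesis
    proof (intro exI[of _ N] allI impI ballI)
      fix n u assume nN: "N \<le> n" and u: "u \<in> {u \<in> var_Lp p \<Omega>. lux_norm p \<Omega> u \<le> 1}"
      then have um: "set_borel_measurable lebesgue \<Omega> u" and un: "lux_norm p \<Omega> u \<le> 1"
        unfolding var_Lp_def by auto
      obtain l where l0: "0 < l" and l2: "l < 2" and lmod: "var_modular p \<Omega> (\<lambda>x. u x / l) \<le> 1"
        using lux_small[OF un] by blast
      show "lux_norm q \<Omega> (\<lambda>x. u x * indicator (E n) x) \<le> ereal \<epsilon>"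
      proof (rule lux_le[OF \<epsilon>0])
        define f1 where "f1 x = ennreal (c powr P) * (ennreal (W x) * indicator \<Omega> x * indicator (E n) x)" for x
        define f2 where "f2 x = ennreal (c powr P * \<eta>) * (ennreal (\<bar>u x / l\<bar> powr p x) * indicator \<Omega> x)" for x
        define U where "U x = indicator \<Omega> x *\<^sub>R u x" for x
        define Pp where "Pp x = indicator \<Omega> x *\<^sub>R p x" for x
        have Um[measurable]: "U \<in> borel_measurable lebesgue" using um unfolding U_def set_borel_measurable_def .
        have Ppm[measurable]: "Pp \<in> borel_measurable lebesgue" using assms(3) unfolding Pp_def set_borel_measurable_def .
        have f1m[measurable]: "f1 \<in> borel_measurable lebesgue" unfolding f1_def by measurable
        have f2eq: "f2 = (\<lambda>x. ennreal (c powr P * \<eta>) * (ennreal (\<bar>U x / l\<bar> powr Pp x) * indicator \<Omega> x))"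
          unfolding f2_def U_def Pp_def by (auto simp: fun_eq_iff split: split_indicator)
        have f2m[measurable]: "f2 \<in> borel_measurable lebesgue" unfolding f2eq by measurable
        have gm: "(\<lambda>x. ennreal (\<bar>u x / l\<bar> powr p x) * indicator \<Omega> x) \<in> borel_measurable lebesgue"
        proof -
          have "(\<lambda>x. ennreal (\<bar>u x / l\<bar> powr p x) * indicator \<Omega> x) = (\<lambda>x. ennreal (\<bar>U x / l\<bar> powr Pp x) * indicator \<Omega> x)"
            unfolding U_def Pp_def by (auto simp: fun_eq_iff split: split_indicator)
          also have "\<dots> \<in> borel_measurable lebesgue" by measurable
          finally show ?thesis .
        qed
        have pt: "AE x in lebesgue. ennreal (\<bar>u x * indicator (E n) x / \<epsilon>\<bar> powr q x) * indicator \<Omega> x \<le> f1 x + f2 x"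
          using assms(14)
        proof eventually_elim
          case (elim x)
          show ?case
          proof (cases "x \<in> \<Omega>")
            case False then show ?thesis by simp
          next
            case True
            have qp: "1 \<le> q x" "q x \<le> p x" "p x \<le> P" using assms(5) True unfolding P_def by auto
            have G: "0 < infdist x K" "infdist x K < 1 / exp 1" "q x < p x"
              "1 / (p x - q x) \<le> ln (ln (1 / infdist x K)) / \<psi> (1 / infdist x K)"
              using elim True by auto
            have Mx: "1 \<le> M x" "M x powr (q x - p x) \<le> \<eta>"
              using pw_bound[OF G assms(11) assms(12) S SL \<delta>_def B1 B\<delta> \<gamma>0 L\<eta>] unfolding M_def by auto
            show ?thesis
            proof (cases "x \<in> E n")
              case False then show ?thesis by simp
            next
              case inE: True
              define a where "a = \<bar>u x / l\<bar>"
              have a0: "0 \<le> a" unfolding a_def by simp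
              have "\<bar>u x * indicator (E n) x / \<epsilon>\<bar> = (l / \<epsilon>) * a"
                using inE l0 \<epsilon>0 unfolding a_def by (simp add: abs_mult abs_divide field_simps)
              also have "\<dots> \<le> c * a" unfolding c_def using l2 l0 \<epsilon>0 a0
                by (intro mult_right_mono divide_right_mono) auto
              finally have "\<bar>u x * indicator (E n) x / \<epsilon>\<bar> powr q x \<le> (c * a) powr q x"
                using qp by (intro powr_mono2) auto
              also have "\<dots> \<le> c powr P * (M x powr P + a powr p x * \<eta>)"
                by (rule key_pw[OF a0 Mx(1) qp c1 Mx(2)])
              also have "\<dots> = c powr P * W x + c powr P * \<eta> * a powr p x"
                unfolding W_def by (simp add: algebra_simps)
              finally have le: "\<bar>u x * indicator (E n) x / \<epsilon>\<bar> powr q x \<le> c powr P * W x + c powr P * \<eta> * a powr p x" .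
              have e1: "f1 x = ennreal (c powr P * W x)"
                unfolding f1_def using True inE ennreal_mult[of "c powr P" "W x"] by (simp add: W_def)
              have e2: "f2 x = ennreal (c powr P * \<eta> * a powr p x)"
                unfolding f2_def a_def using True ennreal_mult[of "c powr P * \<eta>" "\<bar>u x / l\<bar> powr p x"] \<eta>0 by simp
              have "f1 x + f2 x = ennreal (c powr P * W x + c powr P * \<eta> * a powr p x)"
                unfolding e1 e2 using \<eta>0 by (subst ennreal_plus) (auto simp: W_def)
              then show ?thesis using True le by (simp add: ennreal_leI)
            qed
          qed
        qed
        have "var_modular q \<Omega> (\<lambda>x. u x * indicator (E n) x / \<epsilon>)
            = (\<integral>\<^sup>+ x. ennreal (\<bar>u x * indicator (E n) x / \<epsilon>\<bar> powr q x) * indicator \<Omega> x \<partial>lebesgue)"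
          unfolding var_modular_def by simp
        also have "\<dots> \<le> (\<integral>\<^sup>+ x. f1 x + f2 x \<partial>lebesgue)" by (rule nn_integral_mono_AE[OF pt])
        also have "\<dots> = (\<integral>\<^sup>+ x. f1 x \<partial>lebesgue) + (\<integral>\<^sup>+ x. f2 x \<partial>lebesgue)"
          by (rule nn_integral_add) measurable
        also have "(\<integral>\<^sup>+ x. f1 x \<partial>lebesgue) = ennreal (c powr P) * (\<integral>\<^sup>+ x. ennreal (W x) * indicator \<Omega> x * indicator (E n) x \<partial>lebesgue)"
          unfolding f1_def by (rule nn_integral_cmult) measurable
        also have "(\<integral>\<^sup>+ x. f2 x \<partial>lebesgue) = ennreal (c powr P * \<eta>) * var_modular p \<Omega> (\<lambda>x. u x / l)"
          unfolding f2_def var_modular_def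
          by (rule nn_integral_cmult[OF gm])
        also have "ennreal (c powr P) * (\<integral>\<^sup>+ x. ennreal (W x) * indicator \<Omega> x * indicator (E n) x \<partial>lebesgue)
            \<le> ennreal (c powr P) * ennreal \<eta>"
          using N[OF nN] by (intro mult_left_mono) auto
        also have "ennreal (c powr P * \<eta>) * var_modular p \<Omega> (\<lambda>x. u x / l) \<le> ennreal (c powr P * \<eta>) * 1"
          using lmod by (intro mult_left_mono) auto
        also have "ennreal (c powr P) * ennreal \<eta> + ennreal (c powr P * \<eta>) * 1 = 1"
        proof -
          have h1: "ennreal (c powr P) * ennreal \<eta> = ennreal (1/2)"
            using ennreal_mult[of "c powr P" \<eta>] cP0 \<eta>0 c\<eta> by simp
          have "ennreal (1/2) + ennreal (1/2) = 1"
            using ennreal_plus[of "1/2" "1/2"] by simp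
          then show ?thesis using h1 c\<eta> by (simp only: mult_1_right)
        qed
        finally show "var_modular q \<Omega> (\<lambda>x. u x * indicator (E n) x / \<epsilon>) \<le> 1"
          by (simp add: add_mono)
      qed
    qed
  qed
  show ?thesis
    unfolding almost_compact_emb_def
  proof (intro allI impI)
    fix E :: "nat \<Rightarrow> 'a set"
    assume hyp: "(\<forall>n. E n \<in> sets lebesgue \<and> E n \<subseteq> \<Omega>) \<and>
        (AE x in lebesgue. x \<in> \<Omega> \<longrightarrow> (\<lambda>n. indicator (E n) x :: real) \<longlonglongrightarrow> 0)"
    define S where "S = {u \<in> var_Lp p \<Omega>. lux_norm p \<Omega> u \<le> 1}"
    define X where "X n = (SUP u\<in>S. lux_norm q \<Omega> (\<lambda>x. u x * indicator (E n) x))" for n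
    have zS: "(\<lambda>x. 0) \<in> S"
    proof -
      have "lux_norm p \<Omega> (\<lambda>x. 0) \<le> ereal 1" by (rule lux_le) (simp_all add: var_modular_def)
      then show ?thesis unfolding S_def var_Lp_def set_borel_measurable_def by (auto simp: one_ereal_def)
    qed
    have X0: "0 \<le> X n" for n unfolding X_def by (rule SUP_upper2[OF zS]) (rule lux_nonneg)
    have Xe: "eventually (\<lambda>n. X n \<le> ereal \<epsilon>) sequentially" if \<epsilon>: "0 < \<epsilon>" for \<epsilon>
    proof -
      obtain N where N: "\<forall>n\<ge>N. \<forall>u\<in>S. lux_norm q \<Omega> (\<lambda>x. u x * indicator (E n) x) \<le> ereal (min \<epsilon> 1)"
        using K[of "min \<epsilon> 1" E] \<epsilon> hyp unfolding S_def by auto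
      have "X n \<le> ereal \<epsilon>" if "n \<ge> N" for n
      proof -
        have "X n \<le> ereal (min \<epsilon> 1)" unfolding X_def using N that by (intro SUP_least) auto
        also have "\<dots> \<le> ereal \<epsilon>" by simp
        finally show ?thesis .
      qed
      then show ?thesis unfolding eventually_sequentially by blast
    qed
    have "X \<longlonglongrightarrow> 0"
    proof (rule order_tendstoI)
      fix a :: ereal assume "a < 0"
      then show "eventually (\<lambda>n. a < X n) sequentially"
        using X0 by (intro always_eventually) (auto intro: less_le_trans)
    next
      fix a :: ereal assume a: "0 < a"
      obtain b where b: "0 < b" "b < a" using dense[OF a] by blast
      have bf: "b = ereal (real_of_ereal b)" using b by (cases b) auto
      have "0 < real_of_ereal b" using b bf by (metis ereal_less(2))
      then have "eventually (\<lambda>n. X n \<le> ereal (real_of_ereal b)) sequentially" by (rule Xe)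
      then show "eventually (\<lambda>n. X n < a) sequentially"
        by (rule eventually_mono) (use b bf in \<open>metis le_less_trans\<close>)
    qed
    then show "(\<lambda>n. SUP u\<in>{u \<in> var_Lp p \<Omega>. lux_norm p \<Omega> u \<le> 1}.
                    lux_norm q \<Omega> (\<lambda>x. u x * indicator (E n) x)) \<longlonglongrightarrow> 0"
      unfolding X_def S_def .
  qed
qed

end
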